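(* Let $G$ be an infinite discrete group and let $X$ be a minimal $G$-flow. The following are equivalent: (i) For every finite $D\subseteq G$ there is a $D$-separated $S\subseteq G$ such that for every $x\in X$, the set $S\cdot x$ is dense in $X$. (ii) $X$ has the separated covering property. (iii) $X$ is disjoint from the Bernoulli flow $2^G$.
   Context: A $G$-flow is a compact Hausdorff space with an action of $G$ by homeomorphisms; it is minimal if every orbit is dense. For finite $D\subseteq G$, a set $S\subseteq G$ is $D$-separated if $Dg\cap Dh=\emptyset$ for all distinct $g,h\in S$. A minimal $G$-flow $X$ has the separated covering property (SCP) if for every finite $D\subseteq G$ and every non-empty open $U\subseteq X$ there exists a $D$-separated $S\subseteq G$ with $S^{-1}U=X$. The Bernoulli flow is $2^G$ with the action $(g\cdot z)(h)=z(hg)$. Two $G$-flows $X,Y$ are disjoint if the only closed $G$-invariant subset of $X\times Y$ projecting onto both factors is $X\times Y$. *)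

theory Defs
  imports "HOL-Analysis.Analysis"
begin

text \<open>A (left) G-flow: a compact Hausdorff space X with an action of the (discrete)
  group G (written additively, type class group_add, not necessarily commutative)
  by continuous maps (hence homeomorphisms).\<close>
definition is_flow :: "('g::group_add \<Rightarrow> 'x \<Rightarrow> 'x) \<Rightarrow> 'x topology \<Rightarrow> bool" where
  "is_flow act X \<longleftrightarrow> compact_space X \<and> Hausdorff_space X \<and>
     (\<forall>g. continuous_map X X (act g)) \<and>
     (\<forall>x\<in>topspace X. act 0 x = x) \<and>
     (\<forall>g h. \<forall>x\<in>topspace X. act (g + h) x = act g (act h x))"

definition minimal_flow :: "('g::group_add \<Rightarrow> 'x \<Rightarrow> 'x) \<Rightarrow> 'x topology \<Rightarrow> bool" where
  "minimal_flow act X \<longleftrightarrow> is_flow act X \<and>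
     (\<forall>x\<in>topspace X. X closure_of (range (\<lambda>g. act g x)) = topspace X)"

definition separated :: "'g::group_add set \<Rightarrow> 'g set \<Rightarrow> bool" where
  "separated D S \<longleftrightarrow>
     (\<forall>g\<in>S. \<forall>h\<in>S. g \<noteq> h \<longrightarrow> ((\<lambda>d. d + g) ` D) \<inter> ((\<lambda>d. d + h) ` D) = {})"

definition SCP :: "('g::group_add \<Rightarrow> 'x \<Rightarrow> 'x) \<Rightarrow> 'x topology \<Rightarrow> bool" where
  "SCP act X \<longleftrightarrow>
     (\<forall>D U. finite D \<and> openin X U \<and> U \<noteq> {} \<longrightarrow>
        (\<exists>S. separated D S \<and> (\<Union>g\<in>S. act (- g) ` U) = topspace X))"

definition bernoulli_top :: "('g \<Rightarrow> bool) topology" where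
  "bernoulli_top = product_topology (\<lambda>_. discrete_topology UNIV) UNIV"

definition bernoulli_act :: "'g::group_add \<Rightarrow> ('g \<Rightarrow> bool) \<Rightarrow> ('g \<Rightarrow> bool)" where
  "bernoulli_act g z = (\<lambda>h. z (h + g))"

definition disjoint_flows ::
  "('g::group_add \<Rightarrow> 'x \<Rightarrow> 'x) \<Rightarrow> 'x topology \<Rightarrow> ('g \<Rightarrow> 'y \<Rightarrow> 'y) \<Rightarrow> 'y topology \<Rightarrow> bool" where
  "disjoint_flows actX X actY Y \<longleftrightarrow>
     (\<forall>Z. closedin (prod_topology X Y) Z \<and>
          (\<forall>g. \<forall>p\<in>Z. (actX g (fst p), actY g (snd p)) \<in> Z) \<and>
          fst ` Z = topspace X \<and> snd ` Z = topspace Y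
        \<longrightarrow> Z = topspace X \<times> topspace Y)"

end

theory Submission
  imports Defs
begin

unbundle cardinal_syntax

lemma finite_le_infinite_card:
  assumes "finite K" "infinite S" shows "|K| \<le>o |S|"
  using finite_ordLess_infinite[of "|K|" "|S|"] assms
  by (simp add: card_of_well_order_on ordLess_imp_ordLeq Field_card_of)

lemma lists_len_le:
  assumes inf: "infinite (UNIV::'a set)"
  shows "|{xs::'a list. length xs = n}| \<le>o |UNIV::'a set|"
proof (induction n)
  case 0
  have "{xs::'a list. length xs = 0} = {[]}" by auto
  then show ?case using finite_le_infinite_card[OF _ inf, of "{[]::'a list}"] by simp
next
  case (Suc n)
  let ?A = "{xs::'a list. length xs = n}"
  have ne: "?A \<noteq> {}" using length_replicate[of n undefined] by blast
  have sub: "{xs::'a list. length xs = Suc n} \<subseteq> (\<lambda>(x,xs). x#xs) ` (UNIV \<times> ?A)"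
  proof
    fix xs :: "'a list" assume "xs \<in> {xs. length xs = Suc n}"
    then obtain y ys where "xs = y # ys" "length ys = n" by (cases xs) auto
    then show "xs \<in> (\<lambda>(x,xs). x#xs) ` (UNIV \<times> ?A)" by force
  qed
  have 1: "|{xs::'a list. length xs = Suc n}| \<le>o |(\<lambda>(x,xs). x#xs) ` (UNIV \<times> ?A)|"
    using sub card_of_mono1 by blast
  have 2: "|(\<lambda>(x,xs). x#xs) ` (UNIV \<times> ?A)| \<le>o |(UNIV::'a set) \<times> ?A|" using card_of_image by blast
  have 3: "|(UNIV::'a set) \<times> ?A| =o |UNIV::'a set|"
    using card_of_Times_infinite[OF inf ne Suc.IH] by blast
  show ?case using ordLeq_transitive[OF 1 ordLeq_transitive[OF 2 ordIso_imp_ordLeq[OF 3]]] .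
qed

lemma finite_sets_le:
  assumes inf: "infinite (UNIV::'a set)"
  shows "|{F::'a set. finite F}| \<le>o |UNIV::'a set|"
proof -
  define L where "L = (\<Union>n. {xs::'a list. length xs = n})"
  have "{F::'a set. finite F} \<subseteq> set ` L"
    using finite_list unfolding L_def by blast
  hence 1: "|{F::'a set. finite F}| \<le>o |set ` L|"
    using card_of_mono1 by blast
  have 2: "|set ` L| \<le>o |L|" by (rule card_of_image)
  have 3: "|L| \<le>o |UNIV::'a set|" unfolding L_def
    by (rule card_of_UNION_ordLeq_infinite[OF inf])
       (use inf infinite_iff_card_of_nat lists_len_le in auto)
  show ?thesis using ordLeq_transitive[OF 1 ordLeq_transitive[OF 2 3]] .
qed

lemma times_small:
  assumes inf: "infinite (UNIV::'a set)" and K: "finite K" and S: "|S| <o |UNIV::'a set|"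
  shows "|K \<times> S| <o |UNIV::'a set|"
proof (cases "K = {} \<or> finite S")
  case True
  then have "finite (K \<times> S)" using K by auto
  then show ?thesis using finite_ordLess_infinite[of "|K \<times> S|" "|UNIV::'a set|"] inf
    by (simp add: card_of_well_order_on Field_card_of)
next
  case False
  then have "|K \<times> S| =o |S|" using card_of_Times_infinite[of S K] finite_le_infinite_card[OF K] by auto
  then show ?thesis using S ordIso_ordLess_trans by blast
qed

lemma sep_iff: "separated D S \<longleftrightarrow> (\<forall>g\<in>S. \<forall>h\<in>S. \<forall>d\<in>D. \<forall>d'\<in>D. d + g = d' + h \<longrightarrow> g = h)"
  unfolding separated_def by blast

lemma sep_subset: "separated D S \<Longrightarrow> T \<subseteq> S \<Longrightarrow> separated D T"
  unfolding separated_def by blast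

lemma sep_translate: "separated D F \<Longrightarrow> separated D ((\<lambda>f. f + h) ` F)"
  unfolding sep_iff by (auto simp: add.assoc[symmetric])

lemma grp_solve: "(d::'g::group_add) + (f + h) = d' + s \<Longrightarrow> h = (- f + (- d + d')) + s"
proof -
  assume "d + (f + h) = d' + s"
  then have "f + h = - d + (d' + s)" by (metis add_minus_cancel)
  then have "h = - f + (- d + (d' + s))" by (metis add_minus_cancel)
  then show ?thesis by (simp add: add.assoc)
qed

lemma small_union:
  assumes inf: "infinite (UNIV::'g set)"
    and fin: "\<forall>p\<in>M. finite (fst p)"
    and func: "\<forall>F h h'. (F,h) \<in> M \<longrightarrow> (F,h') \<in> M \<longrightarrow> h = h'"
    and sm: "|Domain M| <o |UNIV::'g set|"
  shows "|\<Union>p\<in>M. (\<lambda>f. f + snd p) ` (fst p :: 'g::group_add set)| <o |UNIV::'g set|"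
proof (cases "finite (\<Union>p\<in>M. (\<lambda>f. f + snd p) ` (fst p :: 'g set))")
  case True
  then show ?thesis using finite_ordLess_infinite[of "|\<Union>p\<in>M. (\<lambda>f. f + snd p) ` (fst p :: 'g set)|" "|UNIV::'g set|"] inf
    by (simp add: card_of_well_order_on Field_card_of)
next
  case False
  have infM: "infinite M" using False fin by auto
  have 1: "|\<Union>p\<in>M. (\<lambda>f. f + snd p) ` (fst p :: 'g set)| \<le>o |M|"
    by (rule card_of_UNION_ordLeq_infinite[OF infM]) (rule ordIso_imp_ordLeq[OF card_of_refl], use fin infM in \<open>auto intro!: finite_le_infinite_card\<close>)
  have "inj_on fst M" using func by (auto simp: inj_on_def)
  then have 2: "|M| \<le>o |Domain M|" using card_of_ordLeq[of M "Domain M"] by (force simp: Domain_fst)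
  show ?thesis using ordLeq_ordLess_trans[OF ordLeq_transitive[OF 1 2] sm] .
qed

lemma universal_sep:
  fixes D :: "'g::group_add set"
  assumes inf: "infinite (UNIV::'g set)" and finD: "finite D"
  shows "\<exists>S. separated D S \<and> (\<forall>F. finite F \<and> separated D F \<longrightarrow> (\<exists>h. (\<lambda>f. f + h) ` F \<subseteq> S))"
proof -
  define FF where "FF = {F::'g set. finite F \<and> separated D F}"
  define r where "r = |FF|"
  have Cr: "Card_order r" unfolding r_def by (rule card_of_Card_order)
  have Fr: "Field r = FF" unfolding r_def by (rule Field_card_of)
  have WOr: "Well_order r" unfolding r_def by (rule card_of_Well_order)
  have wo: "wo_rel r" using WOr by (simp add: wo_rel_def)
  have rle: "r \<le>o |UNIV::'g set|"
    unfolding r_def using ordLeq_transitive[OF card_of_mono1 finite_sets_le[OF inf], of FF]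
    unfolding FF_def by blast
  define SM where "SM M = (\<Union>p\<in>M. (\<lambda>f. f + snd p) ` (fst p :: 'g set))" for M :: "('g set \<times> 'g) set"
  define A where "A = {M. M \<subseteq> FF \<times> UNIV \<and> (\<forall>F h h'. (F,h) \<in> M \<longrightarrow> (F,h') \<in> M \<longrightarrow> h = h')
      \<and> (\<forall>F\<in>Domain M. \<forall>F'. (F',F) \<in> r \<longrightarrow> F' \<in> Domain M) \<and> separated D (SM M)}"
  have Afun: "\<And>M F h h'. M \<in> A \<Longrightarrow> (F,h) \<in> M \<Longrightarrow> (F,h') \<in> M \<Longrightarrow> h = h'"
    unfolding A_def by blast
  have Adown: "\<And>M F F'. M \<in> A \<Longrightarrow> F \<in> Domain M \<Longrightarrow> (F',F) \<in> r \<Longrightarrow> F' \<in> Domain M"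
    unfolding A_def by blast
  have Asep: "\<And>M. M \<in> A \<Longrightarrow> separated D (SM M)"
    unfolding A_def by blast
  have "\<forall>C\<in>chains A. \<Union>C \<in> A"
  proof
    fix C assume C: "C \<in> chains A"
    then have CA: "C \<subseteq> A" and ch: "\<forall>M1\<in>C. \<forall>M2\<in>C. M1 \<subseteq> M2 \<or> M2 \<subseteq> M1"
      unfolding chains_def chain_subset_def by auto
    have "\<Union>C \<subseteq> FF \<times> UNIV" using CA unfolding A_def by auto
    moreover have "\<forall>F h h'. (F,h) \<in> \<Union>C \<longrightarrow> (F,h') \<in> \<Union>C \<longrightarrow> h = h'"
    proof (intro allI impI)
      fix F h h' assume "(F,h) \<in> \<Union>C" "(F,h') \<in> \<Union>C"
      then obtain M1 M2 where M12: "M1 \<in> C" "M2 \<in> C" "(F,h) \<in> M1" "(F,h') \<in> M2" by auto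
      then have "M1 \<subseteq> M2 \<or> M2 \<subseteq> M1" using ch by blast
      then show "h = h'"
      proof
        assume "M1 \<subseteq> M2" then show ?thesis using Afun[of M2 F h h'] M12 CA by blast
      next
        assume "M2 \<subseteq> M1" then show ?thesis using Afun[of M1 F h h'] M12 CA by blast
      qed
    qed
    moreover have "\<forall>F\<in>Domain (\<Union>C). \<forall>F'. (F',F) \<in> r \<longrightarrow> F' \<in> Domain (\<Union>C)"
    proof (intro ballI allI impI)
      fix F F' assume "F \<in> Domain (\<Union>C)" "(F',F) \<in> r"
      then obtain M where "M \<in> C" "F \<in> Domain M" by auto
      then have "F' \<in> Domain M" using \<open>(F',F) \<in> r\<close> CA Adown[of M F F'] by blast
      then show "F' \<in> Domain (\<Union>C)" using \<open>M \<in> C\<close> by auto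
    qed
    moreover have "separated D (SM (\<Union>C))"
      unfolding sep_iff
    proof (intro ballI impI)
      fix g h d d' assume g: "g \<in> SM (\<Union>C)" and h: "h \<in> SM (\<Union>C)" and "d \<in> D" "d' \<in> D" "d + g = d' + h"
      from g obtain M1 where M1: "M1 \<in> C" "g \<in> SM M1" unfolding SM_def by auto
      from h obtain M2 where M2: "M2 \<in> C" "h \<in> SM M2" unfolding SM_def by auto
      have mono: "\<And>X Y. X \<subseteq> Y \<Longrightarrow> SM X \<subseteq> SM Y" unfolding SM_def by blast
      have "M1 \<subseteq> M2 \<or> M2 \<subseteq> M1" using ch M1 M2 by blast
      then have "\<exists>M\<in>C. g \<in> SM M \<and> h \<in> SM M"
        using M1 M2 mono by blast
      then obtain M where "M \<in> C" "g \<in> SM M" "h \<in> SM M" by blast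
      then have "separated D (SM M)" using CA Asep by blast
      then show "g = h" using \<open>g \<in> SM M\<close> \<open>h \<in> SM M\<close> \<open>d \<in> D\<close> \<open>d' \<in> D\<close> \<open>d + g = d' + h\<close>
        unfolding sep_iff by blast
    qed
    ultimately show "\<Union>C \<in> A" unfolding A_def by blast
  qed
  then obtain M where MA: "M \<in> A" and Mmax: "\<forall>X\<in>A. M \<subseteq> X \<longrightarrow> X = M"
    using Zorn_Lemma[of A] by blast
  have Msub: "M \<subseteq> FF \<times> UNIV" and Mfun: "\<forall>F h h'. (F,h) \<in> M \<longrightarrow> (F,h') \<in> M \<longrightarrow> h = h'"
    and Mdown: "\<forall>F\<in>Domain M. \<forall>F'. (F',F) \<in> r \<longrightarrow> F' \<in> Domain M" and Msep: "separated D (SM M)"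
    using MA unfolding A_def by auto
  have DomM: "Domain M = FF"
  proof (rule ccontr)
    assume ne: "Domain M \<noteq> FF"
    have DsubF: "Domain M \<subseteq> FF" using Msub by auto
    define B where "B = FF - Domain M"
    have Bne: "B \<noteq> {}" using ne DsubF unfolding B_def by auto
    define F0 where "F0 = wo_rel.minim r B"
    have F0B: "F0 \<in> B" unfolding F0_def by (rule wo_rel.minim_in[OF wo]) (use Bne Fr B_def in auto)
    have F0least: "\<And>b. b \<in> B \<Longrightarrow> (F0, b) \<in> r" unfolding F0_def
      by (rule wo_rel.minim_least[OF wo]) (use Fr B_def in auto)
    have F0FF: "F0 \<in> FF" and F0n: "F0 \<notin> Domain M" using F0B unfolding B_def by auto
    have antis: "antisym r" and tot: "total_on FF r"
      using WOr Fr unfolding well_order_on_def linear_order_on_def partial_order_on_def by auto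
    have "Domain M \<subseteq> underS r F0"
    proof
      fix F assume FM: "F \<in> Domain M"
      then have FFF: "F \<in> FF" using DsubF by auto
      have "F \<noteq> F0" using FM F0n by auto
      moreover have "(F0,F) \<notin> r" using Mdown FM F0n by blast
      ultimately have "(F,F0) \<in> r" using tot FFF F0FF unfolding total_on_def by blast
      then show "F \<in> underS r F0" using \<open>F \<noteq> F0\<close> unfolding underS_def by auto
    qed
    then have "|Domain M| \<le>o |underS r F0|" by (rule card_of_mono1)
    moreover have "|underS r F0| <o r" using card_of_underS[OF Cr] F0FF Fr by auto
    ultimately have smD: "|Domain M| <o |UNIV::'g set|"
      using ordLeq_ordLess_trans ordLess_ordLeq_trans rle by blast
    have finM: "\<forall>p\<in>M. finite (fst p)" using Msub unfolding FF_def by auto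
    have smS: "|SM M| <o |UNIV::'g set|"
      unfolding SM_def by (rule small_union[OF inf finM Mfun smD])
    define K where "K = (\<lambda>(f,d,d'). - f + (- d + d')) ` (F0 \<times> D \<times> D)"
    have finK: "finite K" unfolding K_def using F0FF finD unfolding FF_def by auto
    define Forb where "Forb = (\<lambda>(k,s). k + s) ` (K \<times> SM M)"
    have "|Forb| \<le>o |K \<times> SM M|" unfolding Forb_def by (rule card_of_image)
    then have "|Forb| <o |UNIV::'g set|" using times_small[OF inf finK smS] ordLeq_ordLess_trans by blast
    then have "Forb \<noteq> UNIV" using ordLess_irreflexive by auto
    then obtain h where hF: "h \<notin> Forb" by auto
    define M' where "M' = insert (F0,h) M"
    have SM': "SM M' = SM M \<union> (\<lambda>f. f + h) ` F0" unfolding SM_def M'_def by auto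
    have sepF0: "separated D ((\<lambda>f. f + h) ` F0)" using F0FF unfolding FF_def by (auto intro: sep_translate)
    have cross: "False" if "f \<in> F0" "s \<in> SM M" "d \<in> D" "d' \<in> D" "d + (f + h) = d' + s" for f s d d'
    proof -
      have "h = (- f + (- d + d')) + s" using grp_solve[OF that(5)] .
      moreover have "- f + (- d + d') \<in> K" unfolding K_def using that by force
      ultimately have "h \<in> Forb" unfolding Forb_def using that(2) by force
      then show False using hF by simp
    qed
    have "separated D (SM M')"
      unfolding SM' sep_iff
    proof (intro ballI impI)
      fix g g' d d' assume g: "g \<in> SM M \<union> (\<lambda>f. f + h) ` F0" and g': "g' \<in> SM M \<union> (\<lambda>f. f + h) ` F0"
        and dD: "d \<in> D" "d' \<in> D" and eq: "d + g = d' + g'"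
      show "g = g'"
      proof (cases "g \<in> SM M")
        case True
        show ?thesis
        proof (cases "g' \<in> SM M")
          case True
          then show ?thesis using \<open>g \<in> SM M\<close> Msep dD eq unfolding sep_iff by blast
        next
          case False
          then obtain f where "f \<in> F0" "g' = f + h" using g' by auto
          then show ?thesis using cross[of f g d' d] True dD eq by auto
        qed
      next
        case False
        then obtain f where f: "f \<in> F0" "g = f + h" using g by auto
        show ?thesis
        proof (cases "g' \<in> SM M")
          case True
          then show ?thesis using cross[of f g' d d'] f dD eq by auto
        next
          case False
          then have "g' \<in> (\<lambda>f. f + h) ` F0" using g' by auto
          then show ?thesis using sepF0 f dD eq unfolding sep_iff by blast
        qed
      qed
    qed
    moreover have "M' \<subseteq> FF \<times> UNIV" using Msub F0FF unfolding M'_def by auto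
    moreover have "\<forall>F h1 h2. (F,h1) \<in> M' \<longrightarrow> (F,h2) \<in> M' \<longrightarrow> h1 = h2"
      using Mfun F0n unfolding M'_def by auto
    moreover have "\<forall>F\<in>Domain M'. \<forall>F'. (F',F) \<in> r \<longrightarrow> F' \<in> Domain M'"
    proof (intro ballI allI impI)
      fix F F' assume FD: "F \<in> Domain M'" and FF': "(F',F) \<in> r"
      show "F' \<in> Domain M'"
      proof (cases "F \<in> Domain M")
        case True
        then show ?thesis using Mdown FF' unfolding M'_def by auto
      next
        case False
        then have "F = F0" using FD unfolding M'_def by auto
        have "F' \<in> FF" using FF' Fr by (auto intro: FieldI1)
        show ?thesis
        proof (rule ccontr)
          assume "F' \<notin> Domain M'"
          then have "F' \<in> B" using \<open>F' \<in> FF\<close> unfolding B_def M'_def by auto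
          then have "(F0,F') \<in> r" by (rule F0least)
          then have "F' = F0" using FF' \<open>F = F0\<close> antis unfolding antisym_def by blast
          then show False using \<open>F' \<notin> Domain M'\<close> unfolding M'_def by auto
        qed
      qed
    qed
    ultimately have "M' \<in> A" unfolding A_def by blast
    then have "M' = M" using Mmax unfolding M'_def by blast
    then show False using F0n unfolding M'_def by auto
  qed
  show ?thesis
  proof (rule exI[of _ "SM M"], intro conjI allI impI)
    show "separated D (SM M)" by (rule Msep)
    fix F assume "finite F \<and> separated D F"
    then have "F \<in> Domain M" using DomM unfolding FF_def by auto
    then obtain h where "(F,h) \<in> M" by auto
    then show "\<exists>h. (\<lambda>f. f + h) ` F \<subseteq> SM M" unfolding SM_def by force
  qed
qed



lemma flowD:
  assumes "is_flow act X"
  shows "compact_space X" "Hausdorff_space X" "continuous_map X X (act g)"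
    "x \<in> topspace X \<Longrightarrow> act 0 x = x"
    "x \<in> topspace X \<Longrightarrow> act (g + h) x = act g (act h x)"
  using assms unfolding is_flow_def by auto

lemma act_top: "is_flow act X \<Longrightarrow> x \<in> topspace X \<Longrightarrow> act g x \<in> topspace X"
  using flowD(3)[of act X g] continuous_map_image_subset_topspace by fastforce

lemma act_inv1: "is_flow act X \<Longrightarrow> x \<in> topspace X \<Longrightarrow> act (- g) (act g x) = x"
  using flowD(4,5)[of act X] by (metis add.left_inverse)

lemma act_inv2: "is_flow act X \<Longrightarrow> x \<in> topspace X \<Longrightarrow> act g (act (- g) x) = x"
  using flowD(4,5)[of act X] by (metis add.right_inverse)

lemma act_img_eq:
  assumes fl: "is_flow act X" and U: "U \<subseteq> topspace X"
  shows "act (- g) ` U = {x \<in> topspace X. act g x \<in> U}"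
proof
  show "act (- g) ` U \<subseteq> {x \<in> topspace X. act g x \<in> U}"
    using U act_top[OF fl] act_inv2[OF fl] by auto
  show "{x \<in> topspace X. act g x \<in> U} \<subseteq> act (- g) ` U"
  proof
    fix x assume "x \<in> {x \<in> topspace X. act g x \<in> U}"
    then have "x \<in> topspace X" "act g x \<in> U" by auto
    then show "x \<in> act (- g) ` U" using act_inv1[OF fl, of x g] by (metis image_eqI)
  qed
qed

lemma act_img_open:
  assumes fl: "is_flow act X" and U: "openin X U"
  shows "openin X (act (- g) ` U)"
  using act_img_eq[OF fl openin_subset[OF U]] openin_continuous_map_preimage[OF flowD(3)[OF fl] U] by simp

lemma dir12:
  assumes fl: "is_flow act X"
    and H: "\<forall>D. finite D \<longrightarrow> (\<exists>S. separated D S \<and>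
              (\<forall>x\<in>topspace X. X closure_of ((\<lambda>g. act g x) ` S) = topspace X))"
  shows "SCP act X"
  unfolding SCP_def
proof (intro allI impI)
  fix D :: "'a set" and U assume DU: "finite D \<and> openin X U \<and> U \<noteq> {}"
  then obtain S where S: "separated D S" and dense: "\<forall>x\<in>topspace X. X closure_of ((\<lambda>g. act g x) ` S) = topspace X"
    using H by blast
  have "(\<Union>g\<in>S. act (- g) ` U) = topspace X"
  proof
    show "(\<Union>g\<in>S. act (- g) ` U) \<subseteq> topspace X"
      using act_top[OF fl] openin_subset DU by blast
    show "topspace X \<subseteq> (\<Union>g\<in>S. act (- g) ` U)"
    proof
      fix x assume x: "x \<in> topspace X"
      obtain u where u: "u \<in> U" using DU by blast
      then have "u \<in> X closure_of ((\<lambda>g. act g x) ` S)" using dense x openin_subset DU by blast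
      then obtain y where "y \<in> (\<lambda>g. act g x) ` S" "y \<in> U" using u DU unfolding in_closure_of by blast
      then obtain g where g: "g \<in> S" "act g x \<in> U" by auto
      then have "x \<in> act (- g) ` U" using act_inv1[OF fl x, of g] by (metis image_eqI)
      then show "x \<in> (\<Union>g\<in>S. act (- g) ` U)" using g by blast
    qed
  qed
  then show "\<exists>S. separated D S \<and> (\<Union>g\<in>S. act (- g) ` U) = topspace X" using S by blast
qed

lemma dir21:
  fixes act :: "'g::group_add \<Rightarrow> 'x \<Rightarrow> 'x"
  assumes fl: "is_flow act X" and inf: "infinite (UNIV :: 'g set)"
    and scp: "SCP act X"
  shows "\<forall>D. finite D \<longrightarrow> (\<exists>S. separated D S \<and>
              (\<forall>x\<in>topspace X. X closure_of ((\<lambda>g. act g x) ` S) = topspace X))"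
proof (intro allI impI)
  fix D :: "'g set" assume finD: "finite D"
  obtain S where Ssep: "separated D S"
    and Suniv: "\<forall>F. finite F \<and> separated D F \<longrightarrow> (\<exists>h. (\<lambda>f. f + h) ` F \<subseteq> S)"
    using universal_sep[OF inf finD] by blast
  have hit: "\<exists>s\<in>S. act s x \<in> U" if U: "openin X U" "U \<noteq> {}" and x: "x \<in> topspace X" for U x
  proof -
    obtain T where Tsep: "separated D T" and Tcov: "(\<Union>g\<in>T. act (- g) ` U) = topspace X"
      using scp[unfolded SCP_def, rule_format, of D U] finD U by blast
    have "compactin X (topspace X)" using flowD(1)[OF fl] compact_space_def by blast
    moreover have "\<forall>V\<in>(\<lambda>g. act (- g) ` U) ` T. openin X V" using act_img_open[OF fl U(1)] by blast
    moreover have "topspace X \<subseteq> \<Union>((\<lambda>g. act (- g) ` U) ` T)" using Tcov by simp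
    ultimately obtain FF where FF: "finite FF" "FF \<subseteq> (\<lambda>g. act (- g) ` U) ` T" "topspace X \<subseteq> \<Union>FF"
      unfolding compactin_def by meson
    then obtain F where F: "F \<subseteq> T" "finite F" "FF = (\<lambda>g. act (- g) ` U) ` F"
      by (meson finite_subset_image)
    have "separated D F" using sep_subset[OF Tsep F(1)] .
    then obtain h where h: "(\<lambda>f. f + h) ` F \<subseteq> S" using Suniv F(2) by blast
    have "act h x \<in> topspace X" using act_top[OF fl x] .
    then obtain f where f: "f \<in> F" "act h x \<in> act (- f) ` U" using FF(3) F(3) by auto
    then have "act f (act h x) \<in> U" using act_inv2[OF fl] openin_subset[OF U(1)] by auto
    then have "act (f + h) x \<in> U" using flowD(5)[OF fl x] by simp
    then show ?thesis using h f by blast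
  qed
  show "\<exists>S. separated D S \<and> (\<forall>x\<in>topspace X. X closure_of ((\<lambda>g. act g x) ` S) = topspace X)"
  proof (intro exI conjI ballI)
    show "separated D S" by (rule Ssep)
    fix x assume x: "x \<in> topspace X"
    show "X closure_of ((\<lambda>g. act g x) ` S) = topspace X"
    proof
      show "X closure_of ((\<lambda>g. act g x) ` S) \<subseteq> topspace X" by (rule closure_of_subset_topspace)
      show "topspace X \<subseteq> X closure_of ((\<lambda>g. act g x) ` S)"
      proof
        fix y assume y: "y \<in> topspace X"
        show "y \<in> X closure_of ((\<lambda>g. act g x) ` S)" unfolding in_closure_of
          using y hit[OF _ _ x] by blast
      qed
    qed
  qed
qed



lemma bern_top[simp]: "topspace bernoulli_top = UNIV"
  unfolding bernoulli_top_def by (simp add: topspace_product_topology PiE_UNIV_domain)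

lemma cyl_open:
  assumes "finite J"
  shows "openin bernoulli_top {z. \<forall>j\<in>J. z j = w j}"
  unfolding bernoulli_top_def openin_product_topology_alt
proof (intro ballI)
  fix z0 :: "'a \<Rightarrow> bool" assume z0: "z0 \<in> {z. \<forall>j\<in>J. z j = w j}"
  define U where "U = (\<lambda>i. if i \<in> J then {w i} else (UNIV::bool set))"
  have "{i. U i \<noteq> topspace (discrete_topology UNIV)} \<subseteq> J" unfolding U_def by auto
  then have "finite {i \<in> UNIV. U i \<noteq> topspace (discrete_topology UNIV)}"
    using assms finite_subset by auto
  moreover have "z0 \<in> Pi\<^sub>E UNIV U" using z0 unfolding U_def by (auto simp: PiE_UNIV_domain)
  moreover have "Pi\<^sub>E UNIV U \<subseteq> {z. \<forall>j\<in>J. z j = w j}"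
  proof
    fix z assume "z \<in> Pi\<^sub>E UNIV U"
    then have "\<And>i. z i \<in> U i" by (auto simp: PiE_UNIV_domain Pi_iff)
    then have "z j = w j" if "j \<in> J" for j using that unfolding U_def by (metis singletonD)
    then show "z \<in> {z. \<forall>j\<in>J. z j = w j}" by simp
  qed
  ultimately show "\<exists>U. finite {i \<in> UNIV. U i \<noteq> topspace (discrete_topology UNIV)} \<and>
            (\<forall>i\<in>UNIV. openin (discrete_topology UNIV) (U i)) \<and> z0 \<in> Pi\<^sub>E UNIV U \<and> Pi\<^sub>E UNIV U \<subseteq> {z. \<forall>j\<in>J. z j = w j}"
    by (intro exI[of _ U]) simp
qed

lemma open_cyl:
  assumes "openin bernoulli_top V" "z0 \<in> V"
  shows "\<exists>F. finite F \<and> {z. \<forall>f\<in>F. z f = z0 f} \<subseteq> V"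
proof -
  obtain U where U: "finite {i \<in> UNIV. U i \<noteq> topspace (discrete_topology (UNIV::bool set))}"
     "z0 \<in> Pi\<^sub>E UNIV U" "Pi\<^sub>E UNIV U \<subseteq> V"
    using assms unfolding bernoulli_top_def openin_product_topology_alt by blast
  define F where "F = {i \<in> UNIV. U i \<noteq> topspace (discrete_topology (UNIV::bool set))}"
  have z0U: "\<And>i. z0 i \<in> U i" using U(2) by (auto simp: PiE_UNIV_domain Pi_iff)
  have "{z. \<forall>f\<in>F. z f = z0 f} \<subseteq> Pi\<^sub>E UNIV U"
  proof
    fix z assume z: "z \<in> {z. \<forall>f\<in>F. z f = z0 f}"
    have "z i \<in> U i" for i
    proof (cases "i \<in> F")
      case True then show ?thesis using z z0U by auto
    next
      case False then have "U i = UNIV" unfolding F_def by simp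
      then show ?thesis by simp
    qed
    then show "z \<in> Pi\<^sub>E UNIV U" by (auto simp: PiE_UNIV_domain Pi_iff)
  qed
  then have "{z. \<forall>f\<in>F. z f = z0 f} \<subseteq> V" using U(3) by (rule order_trans)
  moreover have "finite F" unfolding F_def by (rule U(1))
  ultimately show ?thesis by blast
qed



lemma dir23:
  fixes act :: "'g::group_add \<Rightarrow> 'x \<Rightarrow> 'x"
  assumes fl: "is_flow act X" and scp: "SCP act X"
  shows "disjoint_flows act X bernoulli_act bernoulli_top"
  unfolding disjoint_flows_def
proof (intro allI impI)
  fix Z :: "('x \<times> ('g \<Rightarrow> bool)) set"
  assume asm: "closedin (prod_topology X bernoulli_top) Z \<and>
          (\<forall>g. \<forall>p\<in>Z. (act g (fst p), bernoulli_act g (snd p)) \<in> Z) \<and>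
          fst ` Z = topspace X \<and> snd ` Z = topspace bernoulli_top"
  then have cl: "closedin (prod_topology X bernoulli_top) Z"
    and inv: "\<And>g p. p \<in> Z \<Longrightarrow> (act g (fst p), bernoulli_act g (snd p)) \<in> Z"
    and pr2: "snd ` Z = UNIV" by auto
  have Zsub: "Z \<subseteq> topspace X \<times> UNIV" using closedin_subset[OF cl] by (simp add: topspace_prod_topology)
  show "Z = topspace X \<times> topspace bernoulli_top"
  proof
    show "Z \<subseteq> topspace X \<times> topspace bernoulli_top" using Zsub by simp
    show "topspace X \<times> topspace bernoulli_top \<subseteq> Z"
    proof
      fix p :: "'x \<times> ('g \<Rightarrow> bool)" assume "p \<in> topspace X \<times> topspace bernoulli_top"
      then obtain x0 z0 where p: "p = (x0, z0)" and x0: "x0 \<in> topspace X" by (cases p) auto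
      have "(x0, z0) \<in> prod_topology X bernoulli_top closure_of Z"
        unfolding in_closure_of
      proof (intro conjI allI impI)
        show "(x0, z0) \<in> topspace (prod_topology X bernoulli_top)" using x0 by (simp add: topspace_prod_topology)
        fix T assume T: "(x0, z0) \<in> T \<and> openin (prod_topology X bernoulli_top) T"
        then obtain U V where UV: "openin X U" "openin bernoulli_top V" "x0 \<in> U" "z0 \<in> V" "U \<times> V \<subseteq> T"
          unfolding openin_prod_topology_alt by blast
        obtain F where F: "finite F" "{z. \<forall>f\<in>F. z f = z0 f} \<subseteq> V" using open_cyl[OF UV(2,4)] by blast
        have "finite F \<and> openin X U \<and> U \<noteq> {}" using F UV by auto
        then obtain S where Ssep: "separated F S" and Scov: "(\<Union>g\<in>S. act (- g) ` U) = topspace X"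
          using scp[unfolded SCP_def, rule_format, of F U] by blast
        define z where "z k = (\<exists>s\<in>S. \<exists>f\<in>F. k = f + s \<and> z0 f)" for k
        have zkey: "z (f + s) = z0 f" if "s \<in> S" "f \<in> F" for s f
        proof
          assume "z (f + s)"
          then obtain s' f' where "s' \<in> S" "f' \<in> F" "f + s = f' + s'" "z0 f'" unfolding z_def by blast
          moreover then have "s = s'" using Ssep that unfolding sep_iff by blast
          ultimately show "z0 f" by simp
        next
          assume "z0 f" then show "z (f + s)" unfolding z_def using that by blast
        qed
        obtain x where xZ: "(x, z) \<in> Z" using pr2 by (metis UNIV_I imageE prod.collapse)
        then have x: "x \<in> topspace X" using Zsub by auto
        then obtain s u where su: "s \<in> S" "u \<in> U" "x = act (- s) u" using Scov by blast
        have "act s x = u" using su act_inv2[OF fl] openin_subset[OF UV(1)] by auto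
        then have 1: "(u, bernoulli_act s z) \<in> Z" using inv[OF xZ, of s] by simp
        have "bernoulli_act s z \<in> V"
          using F(2) zkey[OF su(1)] unfolding bernoulli_act_def by auto
        then have "(u, bernoulli_act s z) \<in> T" using UV(5) su(2) by auto
        then show "\<exists>y. y \<in> Z \<and> y \<in> T" using 1 by blast
      qed
      then show "p \<in> Z" using closure_of_closedin[OF cl] p by simp
    qed
  qed
qed

lemma dir32:
  fixes act :: "'g::group_add \<Rightarrow> 'x \<Rightarrow> 'x"
  assumes fl: "is_flow act X" and dj: "disjoint_flows act X bernoulli_act bernoulli_top"
  shows "SCP act X"
proof (rule ccontr)
  assume "\<not> SCP act X"
  then have "\<exists>D U. (finite D \<and> openin X U \<and> U \<noteq> {}) \<and>
        \<not> (\<exists>S. separated D S \<and> (\<Union>g\<in>S. act (- g) ` U) = topspace X)"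
    unfolding SCP_def by (simp only: not_all not_imp)
  then obtain D :: "'g set" and U where DU0: "finite D \<and> openin X U \<and> U \<noteq> {}"
    and noS0: "\<not> (\<exists>S. separated D S \<and> (\<Union>g\<in>S. act (- g) ` U) = topspace X)"
    by blast
  have DU: "finite D" "openin X U" "U \<noteq> {}" using DU0 by auto
  have noS: "\<And>S. separated D S \<Longrightarrow> (\<Union>g\<in>S. act (- g) ` U) \<noteq> topspace X" using noS0 by blast
  have Usub: "U \<subseteq> topspace X" using openin_subset[OF DU(2)] .
  define E where "E = (\<lambda>(d,d'). - d' + d) ` (D \<times> D) - {0}"
  have finE: "finite E" unfolding E_def using DU(1) by auto
  define pat where "pat z g = (z g \<and> (\<forall>e\<in>E. \<not> z (e + g)))" for z :: "'g \<Rightarrow> bool" and g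
  define Z where "Z = {p \<in> topspace X \<times> UNIV. \<forall>g. pat (snd p) g \<longrightarrow> act g (fst p) \<notin> U}"
  have patsep: "separated D {g. pat z g}" for z
    unfolding sep_iff
  proof (intro ballI impI)
    fix g h d d' assume g: "g \<in> {g. pat z g}" and h: "h \<in> {g. pat z g}" and dd: "d \<in> D" "d' \<in> D"
      and eq: "d + g = d' + h"
    show "g = h"
    proof (rule ccontr)
      assume ne: "g \<noteq> h"
      have "(- d' + d) + g = h" using eq by (metis add.assoc add_minus_cancel)
      then have "- d' + d \<noteq> 0" using ne by auto
      then have "- d' + d \<in> E" unfolding E_def using dd by force
      then have "\<not> z ((- d' + d) + g)" using g unfolding pat_def by auto
      then show False using h \<open>(- d' + d) + g = h\<close> unfolding pat_def by auto
    qed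
  qed
  have patopen: "openin bernoulli_top {z. pat z g}" for g
  proof (subst openin_subopen, intro ballI)
    fix z0 assume z0: "z0 \<in> {z. pat z g}"
    define J where "J = insert g ((\<lambda>e. e + g) ` E)"
    have "finite J" unfolding J_def using finE by auto
    moreover have "{z. \<forall>j\<in>J. z j = z0 j} \<subseteq> {z. pat z g}"
      using z0 unfolding J_def pat_def by auto
    moreover have "z0 \<in> {z. \<forall>j\<in>J. z j = z0 j}" by simp
    ultimately show "\<exists>T. openin bernoulli_top T \<and> z0 \<in> T \<and> T \<subseteq> {z. pat z g}"
      using cyl_open by blast
  qed
  have Zcl: "closedin (prod_topology X bernoulli_top) Z"
    unfolding closedin_def
  proof
    show "Z \<subseteq> topspace (prod_topology X bernoulli_top)" unfolding Z_def by (auto simp: topspace_prod_topology)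
    show "openin (prod_topology X bernoulli_top) (topspace (prod_topology X bernoulli_top) - Z)"
    proof (subst openin_subopen, intro ballI)
      fix p assume p: "p \<in> topspace (prod_topology X bernoulli_top) - Z"
      obtain x z where pxz: "p = (x, z)" by (cases p)
      have x: "x \<in> topspace X" using p pxz by (simp add: topspace_prod_topology)
      then obtain g where g: "pat z g" "act g x \<in> U" using p pxz unfolding Z_def by auto
      define W where "W = {y \<in> topspace X. act g y \<in> U} \<times> {z. pat z g}"
      have "openin X {y \<in> topspace X. act g y \<in> U}"
        using openin_continuous_map_preimage[OF flowD(3)[OF fl] DU(2)] by simp
      then have "openin (prod_topology X bernoulli_top) W"
        unfolding W_def using patopen openin_prod_Times_iff by blast
      moreover have "p \<in> W" using pxz x g unfolding W_def by auto
      moreover have "W \<subseteq> topspace (prod_topology X bernoulli_top) - Z"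
        unfolding W_def Z_def by (auto simp: topspace_prod_topology)
      ultimately show "\<exists>T. openin (prod_topology X bernoulli_top) T \<and> p \<in> T \<and> T \<subseteq> topspace (prod_topology X bernoulli_top) - Z"
        by blast
    qed
  qed
  have Zinv: "\<forall>g. \<forall>p\<in>Z. (act g (fst p), bernoulli_act g (snd p)) \<in> Z"
  proof (intro allI ballI)
    fix h p assume p: "p \<in> Z"
    then have x: "fst p \<in> topspace X" unfolding Z_def by auto
    have "pat (bernoulli_act h (snd p)) g = pat (snd p) (g + h)" for g
      unfolding pat_def bernoulli_act_def by (simp add: add.assoc)
    moreover have "act g (act h (fst p)) = act (g + h) (fst p)" for g using flowD(5)[OF fl x] by simp
    ultimately show "(act h (fst p), bernoulli_act h (snd p)) \<in> Z"
      using p act_top[OF fl x] unfolding Z_def by auto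
  qed
  have pr1: "fst ` Z = topspace X"
  proof
    show "fst ` Z \<subseteq> topspace X" unfolding Z_def by auto
    show "topspace X \<subseteq> fst ` Z"
    proof
      fix x assume "x \<in> topspace X"
      then have "(x, \<lambda>_. False) \<in> Z" unfolding Z_def pat_def by auto
      then show "x \<in> fst ` Z" by force
    qed
  qed
  have pr2: "snd ` Z = topspace bernoulli_top"
  proof -
    have "z \<in> snd ` Z" for z
    proof -
      have cov: "(\<Union>g\<in>{g. pat z g}. act (- g) ` U) \<subseteq> topspace X"
        using act_top[OF fl] Usub by blast
      then obtain x where x: "x \<in> topspace X" "x \<notin> (\<Union>g\<in>{g. pat z g}. act (- g) ` U)"
        using noS[OF patsep[of z]] by blast
      have "act g x \<notin> U" if "pat z g" for g
      proof
        assume "act g x \<in> U"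
        then have "x \<in> act (- g) ` U" using act_inv1[OF fl x(1), of g] by (metis image_eqI)
        then show False using x(2) that by blast
      qed
      then have "(x, z) \<in> Z" unfolding Z_def using x(1) by auto
      then show ?thesis by force
    qed
    then show ?thesis by auto
  qed
  have "Z = topspace X \<times> topspace bernoulli_top"
    using dj Zcl Zinv pr1 pr2 unfolding disjoint_flows_def by blast
  moreover obtain x0 where x0: "x0 \<in> U" using DU(3) by blast
  moreover have "(x0, \<lambda>h. h = 0) \<notin> Z"
  proof
    assume "(x0, \<lambda>h. h = 0) \<in> Z"
    moreover have "pat (\<lambda>h. h = 0) 0" unfolding pat_def E_def by auto
    moreover have "act 0 x0 = x0" using flowD(4)[OF fl] x0 Usub by auto
    ultimately show False using x0 unfolding Z_def by auto
  qed
  ultimately show False using Usub by auto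
qed


theorem proposition2p5:
  fixes act :: "'g::group_add \<Rightarrow> 'x \<Rightarrow> 'x" and X :: "'x topology"
  assumes "infinite (UNIV :: 'g set)"
    and "minimal_flow act X"
  shows "((\<forall>D. finite D \<longrightarrow> (\<exists>S. separated D S \<and>
              (\<forall>x\<in>topspace X. X closure_of ((\<lambda>g. act g x) ` S) = topspace X)))
          \<longleftrightarrow> SCP act X)
       \<and> (SCP act X \<longleftrightarrow> disjoint_flows act X bernoulli_act bernoulli_top)"
proof -
  have fl: "is_flow act X" using assms(2) unfolding minimal_flow_def by blast
  show ?thesis using dir12[OF fl] dir21[OF fl assms(1)] dir23[OF fl] dir32[OF fl] by blast
qed

end
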